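(* Let $a\in\mathbb{C}_p$, $a\neq0$, $A=|a|_p$, and $f(x)=\frac{ax}{x^2+a}$, whose unique fixed point is $x_0=0$ (with $f'(0)=1$). Then: 1.1) The maximal Siegel disk of $f$ centered at $0$ is $SI(0)=U_{\sqrt A}(0)$. 1.2) $\mathcal P\subset S_{\sqrt A}(0)$. 2) If $r>\sqrt A$ and $x\in S_r(0)$, then $f^n(x)\in S_{A/r}(0)$ for all $n\ge1$. 3) Let $x\in S_{\sqrt A}(0)\setminus\mathcal P$ and $A^*(x)=|f(x)|_p$. 3.1) If $A^*(x)=\sqrt A$ then $f(x)\in S_{\sqrt A}(0)$. 3.2) If $A^*(x)>\sqrt A$ then $f^n(x)\in S_{A/A^*(x)}(0)$ for all $n\ge 2$.
   Context: For $c\in\mathbb{C}_p$, $r>0$: $U_r(c)=\{x:|x-c|_p<r\}$, $V_r(c)=\{x:|x-c|_p\le r\}$, $S_r(c)=\{x:|x-c|_p=r\}$. $f$ is defined on $\mathbb{C}_p\setminus\{\pm\sqrt{-a}\}$ and $\mathcal P=\{x\in\mathbb{C}_p:\ \exists n\in\mathbb{N}\cup\{0\},\ f^n(x)\in\{\sqrt{-a},-\sqrt{-a}\}\}$. A sphere $S_\rho(x_0)$ is invariant if $x\in S_\rho(x_0)$ implies $f^n(x)\in S_\rho(x_0)$ for all $n\ge1$. A ball $U_r(x_0)$ is a Siegel disk if every sphere $S_\rho(x_0)$ with $\rho<r$ is invariant; the maximal Siegel disk $SI(x_0)$ is the union of all Siegel disks centered at $x_0$. *)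

theory Defs
  imports Complex_Main "HOL-Computational_Algebra.Polynomial" "HOL-Computational_Algebra.Primes"
begin

text \<open>Abstract model of C_p: a field of characteristic 0 with an absolute value nv
  that is non-archimedean, satisfies nv p = 1/p, is complete and algebraically closed.\<close>

definition Cp_like :: "('a::field_char_0 \<Rightarrow> real) \<Rightarrow> nat \<Rightarrow> bool" where
  "Cp_like nv p \<longleftrightarrow>
     prime p \<and>
     (\<forall>x. nv x \<ge> 0) \<and> (\<forall>x. nv x = 0 \<longleftrightarrow> x = 0) \<and>
     (\<forall>x y. nv (x * y) = nv x * nv y) \<and>
     (\<forall>x y. nv (x + y) \<le> max (nv x) (nv y)) \<and>
     nv (of_nat p) = 1 / real p \<and>
     (\<forall>X :: nat \<Rightarrow> 'a. (\<forall>e>0. \<exists>N. \<forall>m\<ge>N. \<forall>n\<ge>N. nv (X m - X n) < e)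
        \<longrightarrow> (\<exists>L. (\<lambda>n. nv (X n - L)) \<longlonglongrightarrow> 0)) \<and>
     (\<forall>q :: 'a poly. degree q \<ge> 1 \<longrightarrow> (\<exists>x. poly q x = 0))"

definition Uball :: "('a::field \<Rightarrow> real) \<Rightarrow> real \<Rightarrow> 'a \<Rightarrow> 'a set" where
  "Uball nv r c = {x. nv (x - c) < r}"

definition Vball :: "('a::field \<Rightarrow> real) \<Rightarrow> real \<Rightarrow> 'a \<Rightarrow> 'a set" where
  "Vball nv r c = {x. nv (x - c) \<le> r}"

definition Sph :: "('a::field \<Rightarrow> real) \<Rightarrow> real \<Rightarrow> 'a \<Rightarrow> 'a set" where
  "Sph nv r c = {x. nv (x - c) = r}"

text \<open>The map f(x) = a x / (x^2 + a); at the two poles Isabelle's convention gives 0.\<close>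
definition fmap :: "'a::field \<Rightarrow> 'a \<Rightarrow> 'a" where
  "fmap a x = a * x / (x ^ 2 + a)"

definition invariant_sphere :: "('a \<Rightarrow> 'a) \<Rightarrow> ('a::field \<Rightarrow> real) \<Rightarrow> real \<Rightarrow> 'a \<Rightarrow> bool" where
  "invariant_sphere f nv \<rho> c \<longleftrightarrow>
     (\<forall>x \<in> Sph nv \<rho> c. \<forall>n\<ge>1. (f ^^ n) x \<in> Sph nv \<rho> c)"

definition siegel_disk :: "('a \<Rightarrow> 'a) \<Rightarrow> ('a::field \<Rightarrow> real) \<Rightarrow> real \<Rightarrow> 'a \<Rightarrow> bool" where
  "siegel_disk f nv r c \<longleftrightarrow> 0 < r \<and> (\<forall>\<rho>. 0 < \<rho> \<and> \<rho> < r \<longrightarrow> invariant_sphere f nv \<rho> c)"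

definition max_siegel :: "('a \<Rightarrow> 'a) \<Rightarrow> ('a::field \<Rightarrow> real) \<Rightarrow> 'a \<Rightarrow> 'a set" where
  "max_siegel f nv c = \<Union>{Uball nv r c | r. siegel_disk f nv r c}"

text \<open>Preimages of the poles: x such that some iterate f^n(x) is a square root of -a.\<close>
definition Pset :: "'a::field \<Rightarrow> 'a set" where
  "Pset a = {x. \<exists>n. ((fmap a) ^^ n) x ^ 2 = - a}"

end

theory Submission
  imports Defs
begin

lemma nv_basic:
  assumes "Cp_like nv p"
  shows "\<And>x. nv x \<ge> 0" "\<And>x. nv x = 0 \<longleftrightarrow> x = 0" "\<And>x y. nv (x * y) = nv x * nv y"
    "\<And>x y. nv (x + y) \<le> max (nv x) (nv y)"
  using assms unfolding Cp_like_def by auto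

lemma nv_one: assumes "Cp_like nv p" shows "nv (1::'a::field_char_0) = 1"
proof -
  have "nv (1::'a) = nv 1 * nv 1" using nv_basic(3)[OF assms, of 1 1] by simp
  moreover have "nv (1::'a) \<noteq> 0" using nv_basic(2)[OF assms, of 1] by simp
  ultimately show ?thesis by (metis mult_cancel_left1)
qed

lemma nv_neg: assumes "Cp_like nv p" shows "nv (- x::'a::field_char_0) = nv x"
proof -
  have "nv (-1::'a) * nv (-1) = 1" using nv_basic(3)[OF assms, of "-1" "-1"] nv_one[OF assms] by simp
  hence "nv (-1::'a) = 1" using nv_basic(1)[OF assms, of "-1"]
    by (metis abs_of_nonneg mult_cancel_left1 mult_cancel_right1 real_sqrt_abs2 real_sqrt_mult_self)
  thus ?thesis using nv_basic(3)[OF assms, of "-1" x] by simp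
qed

lemma nv_div: assumes "Cp_like nv p" and "v \<noteq> 0" shows "nv (u / v::'a::field_char_0) = nv u / nv v"
proof -
  have "nv (u/v) * nv v = nv u" using nv_basic(3)[OF assms(1), of "u/v" v] assms(2) by simp
  moreover have "nv v \<noteq> 0" using nv_basic(2)[OF assms(1)] assms(2) by simp
  ultimately show ?thesis by (simp add: field_simps)
qed

lemma nv_ultra: assumes "Cp_like nv p" and "nv y < nv z" shows "nv (y + z::'a::field_char_0) = nv z"
proof -
  have "nv z \<le> max (nv (y+z)) (nv (-y))" using nv_basic(4)[OF assms(1), of "y+z" "-y"] by simp
  hence "nv z \<le> nv (y+z)" using nv_neg[OF assms(1), of y] assms(2) by auto
  moreover have "nv (y+z) \<le> nv z" using nv_basic(4)[OF assms(1), of y z] assms(2) by auto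
  ultimately show ?thesis by simp
qed

lemma nv_pow2: assumes "Cp_like nv p" shows "nv (x^2::'a::field_char_0) = (nv x)^2"
  using nv_basic(3)[OF assms, of x x] by (simp add: power2_eq_square)

lemma L1:
  assumes c: "Cp_like nv p" and a: "a \<noteq> 0" and x: "nv x < sqrt (nv a)"
  shows "nv (fmap a x :: 'a::field_char_0) = nv x"
proof -
  have n0: "nv x \<ge> 0" using nv_basic(1)[OF c] .
  have a0: "nv a \<ge> 0" using nv_basic(1)[OF c] .
  have "(nv x)^2 < (sqrt (nv a))^2" using x n0 by (intro power_strict_mono) auto
  also have "\<dots> = nv a" using a0 by simp
  finally have "nv (x^2) < nv a" using nv_pow2[OF c, of x] by simp
  hence e: "nv (x^2 + a) = nv a" by (rule nv_ultra[OF c])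
  have "nv a \<noteq> 0" using nv_basic(2)[OF c] a by simp
  hence "nv (x^2 + a) \<noteq> 0" using e by simp
  hence "x^2 + a \<noteq> 0" using nv_basic(2)[OF c, of "x^2+a"] by simp
  hence "nv (fmap a x) = nv (a*x) / nv (x^2+a)" unfolding fmap_def using nv_div[OF c] by blast
  also have "\<dots> = nv a * nv x / nv a" using e nv_basic(3)[OF c, of a x] by simp
  also have "\<dots> = nv x" using \<open>nv a \<noteq> 0\<close> by simp
  finally show ?thesis .
qed

lemma L2:
  assumes c: "Cp_like nv p" and a: "a \<noteq> 0" and x: "nv x > sqrt (nv a)"
  shows "nv (fmap a x :: 'a::field_char_0) = nv a / nv x"
proof -
  have n0: "nv a \<ge> 0" using nv_basic(1)[OF c] .
  have "nv a = (sqrt (nv a))^2" using n0 by simp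
  also have "(sqrt (nv a))^2 < (nv x)^2" using x n0 by (intro power_strict_mono) auto
  finally have "nv a < nv (x^2)" using nv_pow2[OF c, of x] by simp
  hence e0: "nv (a + x^2) = nv (x^2)" by (rule nv_ultra[OF c])
  hence e: "nv (x^2 + a) = (nv x)^2" using nv_pow2[OF c, of x] by (simp add: add.commute)
  have xp: "nv x > 0" using x n0 by (meson le_less_trans real_sqrt_ge_zero)
  hence "nv (x^2 + a) \<noteq> 0" using e by simp
  hence "x^2 + a \<noteq> 0" using nv_basic(2)[OF c, of "x^2+a"] by simp
  hence "nv (fmap a x) = nv (a*x) / nv (x^2+a)" unfolding fmap_def using nv_div[OF c] by blast
  also have "\<dots> = nv a * nv x / ((nv x)^2)" using e nv_basic(3)[OF c, of a x] by simp
  also have "\<dots> = nv a / nv x" using xp by (simp add: power2_eq_square)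
  finally show ?thesis .
qed

lemma L1n:
  assumes c: "Cp_like nv p" and a: "a \<noteq> 0" and x: "nv x < sqrt (nv a)"
  shows "nv (((fmap a)^^n) x :: 'a::field_char_0) = nv x"
  by (induction n) (use L1[OF c a] x in auto)

lemma L2n:
  assumes c: "Cp_like nv p" and a: "a \<noteq> 0" and x: "nv x > sqrt (nv a)" and n: "n \<ge> 1"
  shows "nv (((fmap a)^^n) x :: 'a::field_char_0) = nv a / nv x"
proof -
  obtain m where m: "n = Suc m" using n by (cases n) auto
  have n0: "nv a \<ge> 0" using nv_basic(1)[OF c] .
  have ap: "nv a > 0" using nv_basic(2)[OF c, of a] n0 a by simp
  have xp: "nv x > 0" using x n0 by (meson le_less_trans real_sqrt_ge_zero)
  have "nv a / nv x < sqrt (nv a)"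
  proof -
    have "nv a = sqrt (nv a) * sqrt (nv a)" using n0 by simp
    also have "\<dots> < sqrt (nv a) * nv x" using x ap by (intro mult_strict_left_mono) auto
    finally show ?thesis using xp by (simp add: divide_less_eq)
  qed
  hence "nv (fmap a x) < sqrt (nv a)" using L2[OF c a x] by simp
  hence "nv (((fmap a)^^m) (fmap a x)) = nv (fmap a x)" using L1n[OF c a] by blast
  thus ?thesis using L2[OF c a x] by (simp add: m funpow_Suc_right del: funpow.simps)
qed

lemma notsph:
  assumes c: "Cp_like nv p" and a: "a \<noteq> 0" and x: "nv x \<noteq> sqrt (nv a)"
  shows "nv (((fmap a)^^n) x :: 'a::field_char_0) \<noteq> sqrt (nv a)"
proof (cases "n = 0")
  case True thus ?thesis using x by simp
next
  case False
  have n0: "nv a \<ge> 0" using nv_basic(1)[OF c] .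
  have ap: "nv a > 0" using nv_basic(2)[OF c, of a] n0 a by simp
  show ?thesis
  proof (cases "nv x < sqrt (nv a)")
    case True thus ?thesis using L1n[OF c a True] by simp
  next
    case F: False
    hence g: "nv x > sqrt (nv a)" using x by simp
    have xp: "nv x > 0" using g n0 by (meson le_less_trans real_sqrt_ge_zero)
    have "nv a / nv x < sqrt (nv a)"
    proof -
      have "nv a = sqrt (nv a) * sqrt (nv a)" using n0 by simp
      also have "\<dots> < sqrt (nv a) * nv x" using g ap by (intro mult_strict_left_mono) auto
      finally show ?thesis using xp by (simp add: divide_less_eq)
    qed
    thus ?thesis using L2n[OF c a g] False by simp
  qed
qed

theorem theorem2p4:
  fixes nv :: "'a::field_char_0 \<Rightarrow> real" and p :: nat and a :: 'a
  assumes "Cp_like nv p" and "a \<noteq> 0"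
  defines "A \<equiv> nv a"
  shows "max_siegel (fmap a) nv 0 = Uball nv (sqrt A) 0
    \<and> Pset a \<subseteq> Sph nv (sqrt A) 0
    \<and> (\<forall>r x. r > sqrt A \<longrightarrow> x \<in> Sph nv r 0 \<longrightarrow>
           (\<forall>n\<ge>1. ((fmap a) ^^ n) x \<in> Sph nv (A / r) 0))
    \<and> (\<forall>x \<in> Sph nv (sqrt A) 0 - Pset a.
         (nv (fmap a x) = sqrt A \<longrightarrow> fmap a x \<in> Sph nv (sqrt A) 0)
       \<and> (nv (fmap a x) > sqrt A \<longrightarrow>
           (\<forall>n\<ge>2. ((fmap a) ^^ n) x \<in> Sph nv (A / nv (fmap a x)) 0)))"
proof -
  note c = assms(1) and a = assms(2)
  have n0: "A \<ge> 0" unfolding A_def using nv_basic(1)[OF c] .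
  have ap: "A > 0" unfolding A_def using nv_basic(2)[OF c, of a] nv_basic(1)[OF c, of a] a
    by (simp add: less_le)
  have sd: "siegel_disk (fmap a) nv (sqrt A) 0"
    unfolding siegel_disk_def invariant_sphere_def
  proof (intro conjI allI impI ballI)
    show "0 < sqrt A" using ap by simp
  next
    fix \<rho> x and n :: nat assume r: "0 < \<rho> \<and> \<rho> < sqrt A" and x: "x \<in> Sph nv \<rho> 0"
    have "nv x = \<rho>" using x by (simp add: Sph_def)
    hence "nv (((fmap a)^^n) x) = \<rho>" using L1n[OF c a, of x n] r by (simp add: A_def)
    thus "((fmap a)^^n) x \<in> Sph nv \<rho> 0" by (simp add: Sph_def)
  qed
  have bd: "r \<le> sqrt A" if "siegel_disk (fmap a) nv r 0" for r
  proof (rule ccontr)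
    assume "\<not> r \<le> sqrt A"
    hence inv: "invariant_sphere (fmap a) nv (sqrt A) 0"
      using that ap unfolding siegel_disk_def by auto
    have "degree [:a, 0, 1:] \<ge> 1" by simp
    then obtain y where "poly [:a, 0, 1:] y = 0" using c unfolding Cp_like_def by blast
    hence y: "y^2 + a = 0" by (simp add: power2_eq_square algebra_simps)
    hence "y^2 = -a" by (simp add: eq_neg_iff_add_eq_0)
    hence "(nv y)^2 = A" using nv_pow2[OF c, of y] nv_neg[OF c, of a] by (simp add: A_def)
    hence "nv y = sqrt A" using nv_basic(1)[OF c, of y] by (metis real_sqrt_unique)
    hence "y \<in> Sph nv (sqrt A) 0" by (simp add: Sph_def)
    hence "\<forall>n\<ge>1. ((fmap a)^^n) y \<in> Sph nv (sqrt A) 0" using inv unfolding invariant_sphere_def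
      by blast
    hence "((fmap a)^^1) y \<in> Sph nv (sqrt A) 0" by blast
    hence "fmap a y \<in> Sph nv (sqrt A) 0" by simp
    moreover have "fmap a y = 0" using y by (simp add: fmap_def)
    ultimately show False using nv_basic(2)[OF c, of 0] ap by (simp add: Sph_def)
  qed
  have P1: "max_siegel (fmap a) nv 0 = Uball nv (sqrt A) 0"
  proof
    show "max_siegel (fmap a) nv 0 \<subseteq> Uball nv (sqrt A) 0"
    proof
      fix x assume "x \<in> max_siegel (fmap a) nv 0"
      then obtain r where "siegel_disk (fmap a) nv r 0" "x \<in> Uball nv r 0"
        unfolding max_siegel_def by blast
      thus "x \<in> Uball nv (sqrt A) 0" using bd unfolding Uball_def by fastforce
    qed
    show "Uball nv (sqrt A) 0 \<subseteq> max_siegel (fmap a) nv 0"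
      unfolding max_siegel_def using sd by blast
  qed
  have P2: "Pset a \<subseteq> Sph nv (sqrt A) 0"
  proof
    fix x assume "x \<in> Pset a"
    then obtain n where e: "((fmap a)^^n) x ^ 2 = -a" unfolding Pset_def by blast
    have "(nv (((fmap a)^^n) x))^2 = A" using nv_pow2[OF c, of "((fmap a)^^n) x"] e nv_neg[OF c, of a]
      by (simp add: A_def)
    hence "nv (((fmap a)^^n) x) = sqrt A" using nv_basic(1)[OF c] by (metis real_sqrt_unique)
    hence "nv x = sqrt A" using notsph[OF c a] unfolding A_def by blast
    thus "x \<in> Sph nv (sqrt A) 0" by (simp add: Sph_def)
  qed
  have P3: "\<forall>r x. r > sqrt A \<longrightarrow> x \<in> Sph nv r 0 \<longrightarrow>
           (\<forall>n\<ge>1. ((fmap a) ^^ n) x \<in> Sph nv (A / r) 0)"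
  proof (intro allI impI)
    fix r x and n :: nat assume r: "r > sqrt A" and x: "x \<in> Sph nv r 0" and n: "n \<ge> 1"
    have "nv x = r" using x by (simp add: Sph_def)
    hence "nv (((fmap a)^^n) x) = A / r" using L2n[OF c a, of x n] r n by (simp add: A_def)
    thus "((fmap a)^^n) x \<in> Sph nv (A / r) 0" by (simp add: Sph_def)
  qed
  have P4: "\<forall>x \<in> Sph nv (sqrt A) 0 - Pset a.
         (nv (fmap a x) = sqrt A \<longrightarrow> fmap a x \<in> Sph nv (sqrt A) 0)
       \<and> (nv (fmap a x) > sqrt A \<longrightarrow>
           (\<forall>n\<ge>2. ((fmap a) ^^ n) x \<in> Sph nv (A / nv (fmap a x)) 0))"
  proof (intro ballI conjI impI allI)
    fix x assume "nv (fmap a x) = sqrt A" thus "fmap a x \<in> Sph nv (sqrt A) 0" by (simp add: Sph_def)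
  next
    fix x n assume g: "nv (fmap a x) > sqrt A" and n: "(n::nat) \<ge> 2"
    obtain m where m: "n = Suc m" "m \<ge> 1" using n by (cases n) auto
    have "nv (((fmap a)^^m) (fmap a x)) = A / nv (fmap a x)"
      using L2n[OF c a _ m(2)] g by (simp add: A_def)
    thus "((fmap a) ^^ n) x \<in> Sph nv (A / nv (fmap a x)) 0"
      by (simp add: Sph_def m(1) funpow_Suc_right del: funpow.simps)
  qed
  show ?thesis using P1 P2 P3 P4 by blast
qed

end
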